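(* Let $x_1,\dots,x_n$ be independent random variables taking values in $[0,1]$ with $\mathbb{E}[x_i]\le\nu$ for all $i$, for some $\nu\in[0,1]$. For any $c\ge1$ and any $\lambda\in\big[0,\frac{\ln c}{4n-3}\big]$, $$\mathbb{E}\exp\big(\lambda(x_1+\dots+x_n)^2\big)\le\exp\big(\lambda cn\nu(1+cn\nu)\big).$$ *)

theory Defs
  imports "HOL-Probability.Probability"
begin

end

theory Submission
  imports Defs
begin

lemma exp_sq_step:
  fixes t a m d lam c :: real
  assumes "0 \<le> t" "t \<le> m" "0 \<le> a" "a \<le> d" "0 \<le> lam" "lam * (d * (2*m + d)) \<le> ln c" "c > 0"
  shows "exp (lam*(t+a)^2) \<le> c * exp (lam * t^2)"
proof -
  have "(t+a)^2 = t^2 + a*(2*t+a)" by (simp add: power2_eq_square algebra_simps)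
  also have "a*(2*t+a) \<le> d*(2*m+d)" using assms by (intro mult_mono) auto
  finally have "(t+a)^2 \<le> t^2 + d*(2*m+d)" by simp
  hence "lam*(t+a)^2 \<le> lam*(t^2 + d*(2*m+d))" using assms(5) by (intro mult_left_mono)
  also have "\<dots> \<le> lam*t^2 + ln c" using assms(6) by (simp add: algebra_simps)
  finally have "exp (lam*(t+a)^2) \<le> exp (lam*t^2 + ln c)" by simp
  also have "\<dots> = c * exp (lam*t^2)" using assms(7) by (simp add: exp_add)
  finally show ?thesis .
qed

context prob_space begin

lemma indep_factor:
  fixes X :: "nat \<Rightarrow> 'a \<Rightarrow> real" and G :: "(nat \<Rightarrow> real) \<Rightarrow> real"
  assumes ind: "indep_vars (\<lambda>_. borel) X I" and i: "i \<in> I" and J: "J \<subseteq> I" "i \<notin> J"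
    and G: "G \<in> borel_measurable (PiM J (\<lambda>_. borel))"
    and H: "H = (\<lambda>\<omega>. G (restrict (\<lambda>k. X k \<omega>) J))"
    and int1: "integrable M (X i)" and int2: "integrable M H"
  shows "expectation (\<lambda>\<omega>. X i \<omega> * H \<omega>) = expectation (X i) * expectation H"
proof -
  have "indep_var (PiM {i} (\<lambda>_. borel)) (\<lambda>\<omega>. restrict (\<lambda>k. X k \<omega>) {i}) (PiM J (\<lambda>_. borel)) (\<lambda>\<omega>. restrict (\<lambda>k. X k \<omega>) J)"
    using i J by (intro indep_var_restrict[OF ind]) auto
  from indep_var_compose[OF this, of "\<lambda>f. f i" borel G borel]
  have "indep_var borel (\<lambda>\<omega>. X i \<omega>) borel H"
    using G H by (simp add: comp_def measurable_component_singleton)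
  then show ?thesis using int1 int2 indep_var_lebesgue_integral[of "\<lambda>\<omega>. X i \<omega>" H] by simp
qed

lemma S_meas: "J \<subseteq> J' \<Longrightarrow> (\<lambda>f. (\<Sum>k\<in>J. f k)) \<in> borel_measurable (PiM J' (\<lambda>_. borel::real measure))"
  by (intro borel_measurable_sum measurable_component_singleton) auto

lemma G_meas: "J \<subseteq> J' \<Longrightarrow> (\<lambda>f. exp ((lam::real) * (\<Sum>k\<in>J. f k)^2)) \<in> borel_measurable (PiM J' (\<lambda>_. borel::real measure))"
proof -
  assume J: "J \<subseteq> J'"
  have "(\<lambda>x::real. exp (lam * x^2)) \<in> borel_measurable borel" by measurable
  from measurable_compose[OF S_meas[OF J] this] show ?thesis by (simp add: o_def)
qed

lemma G_meas2: "j \<in> J' \<Longrightarrow> J \<subseteq> J' \<Longrightarrow> (\<lambda>f. f j * exp ((lam::real) * (\<Sum>k\<in>J. f k)^2)) \<in> borel_measurable (PiM J' (\<lambda>_. borel::real measure))"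
  by (intro borel_measurable_times measurable_component_singleton G_meas)

lemma main:
  fixes X :: "nat \<Rightarrow> 'a \<Rightarrow> real" and n :: nat and \<nu> c lam :: real
  assumes ind: "indep_vars (\<lambda>_. borel) X {1..n}"
    and rng: "\<And>i \<omega>. i \<in> {1..n} \<Longrightarrow> \<omega> \<in> space M \<Longrightarrow> X i \<omega> \<in> {0..1}"
    and ex: "\<And>i. i \<in> {1..n} \<Longrightarrow> expectation (X i) \<le> \<nu>"
    and nu: "\<nu> \<in> {0..1}" and c: "c \<ge> 1"
    and lam: "lam \<in> {0 .. ln c / (4 * real n - 3)}"
  shows "expectation (\<lambda>\<omega>. exp (lam * (\<Sum>i=1..n. X i \<omega>)\<^sup>2)) \<le> exp (lam * c * real n * \<nu> * (1 + c * real n * \<nu>))"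
proof -
  define I where "I = {1..n}"
  have finI: "finite I" and cardI: "card I = n" by (simp_all add: I_def)
  have lam0: "0 \<le> lam" using lam by auto
  have lamc: "lam * (4 * real n - 3) \<le> ln c" if "n \<ge> 1"
  proof -
    have "4 * real n - 3 > 0" using that by simp
    thus ?thesis using lam by (simp add: field_simps)
  qed
  have ind': "indep_vars (\<lambda>_. borel) X I" using ind by (simp add: I_def)
  have rng': "\<And>i \<omega>. i \<in> I \<Longrightarrow> \<omega> \<in> space M \<Longrightarrow> 0 \<le> X i \<omega> \<and> X i \<omega> \<le> 1"
    using rng by (auto simp: I_def)
  have meas: "\<And>i. i \<in> I \<Longrightarrow> X i \<in> borel_measurable M" using ind' unfolding indep_vars_def by auto
  define T where "T J \<omega> = (\<Sum>k\<in>J. X k \<omega>)" for J \<omega>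
  define E where "E J \<omega> = exp (lam * (T J \<omega>)^2)" for J \<omega>
  have T_meas: "T J \<in> borel_measurable M" if "J \<subseteq> I" for J
    unfolding T_def using that meas by (intro borel_measurable_sum) auto
  have E_meas: "E J \<in> borel_measurable M" if "J \<subseteq> I" for J
    unfolding E_def using T_meas[OF that] by measurable
  have T_bnd: "0 \<le> T J \<omega> \<and> T J \<omega> \<le> card J" if "J \<subseteq> I" "\<omega> \<in> space M" for J \<omega>
  proof -
    have "T J \<omega> \<le> (\<Sum>k\<in>J. 1)" unfolding T_def using that rng' by (intro sum_mono) auto
    moreover have "0 \<le> T J \<omega>" unfolding T_def using that rng' by (intro sum_nonneg) auto
    ultimately show ?thesis by simp
  qed
  have cardJ: "card J \<le> n" if "J \<subseteq> I" for J
    using card_mono[OF finI that] cardI by simp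
  have E_bnd: "1 \<le> E J \<omega> \<and> E J \<omega> \<le> exp (lam * real n ^ 2)" if "J \<subseteq> I" "\<omega> \<in> space M" for J \<omega>
  proof -
    have t: "0 \<le> T J \<omega>" "T J \<omega> \<le> real n" using T_bnd[OF that] cardJ[OF that(1)] by auto
    have "(T J \<omega>)^2 \<le> real n ^ 2" using t by (intro power_mono) auto
    hence "lam * (T J \<omega>)^2 \<le> lam * real n ^ 2" using lam0 by (intro mult_left_mono)
    moreover have "0 \<le> lam * (T J \<omega>)^2" using lam0 by simp
    ultimately show ?thesis unfolding E_def by simp
  qed
  have bint: "integrable M f" if "f \<in> borel_measurable M" "\<And>\<omega>. \<omega> \<in> space M \<Longrightarrow> \<bar>f \<omega>\<bar> \<le> B" for f :: "'a \<Rightarrow> real" and B :: real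
    using that by (intro integrable_const_bound[where B=B]) auto
  define B where "B = exp (lam * real n ^ 2)"
  have X_int: "integrable M (X i)" if "i \<in> I" for i
    by (rule bint[OF meas[OF that], of 1]) (use rng' that in auto)
  have E_int: "integrable M (E J)" if "J \<subseteq> I" for J
    by (rule bint[OF E_meas[OF that], of B]) (use E_bnd[OF that] B_def in force)
  have XE_int: "integrable M (\<lambda>\<omega>. X i \<omega> * E J \<omega>)" if "i \<in> I" "J \<subseteq> I" for i J
  proof (rule bint[of _ B])
    show "(\<lambda>\<omega>. X i \<omega> * E J \<omega>) \<in> borel_measurable M" using meas[OF that(1)] E_meas[OF that(2)] by measurable
    fix \<omega> assume w: "\<omega> \<in> space M"
    have "\<bar>X i \<omega>\<bar> \<le> 1" "\<bar>E J \<omega>\<bar> \<le> B" using rng'[OF that(1) w] E_bnd[OF that(2) w] B_def by auto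
    thus "\<bar>X i \<omega> * E J \<omega>\<bar> \<le> B" by (simp add: abs_mult mult_le_one) (smt (verit) mult_left_le_one_le abs_ge_zero)
  qed
  have XXE_int: "integrable M (\<lambda>\<omega>. X i \<omega> * (X j \<omega> * E J \<omega>))" if "i \<in> I" "j \<in> I" "J \<subseteq> I" for i j J
  proof (rule bint[of _ B])
    show "(\<lambda>\<omega>. X i \<omega> * (X j \<omega> * E J \<omega>)) \<in> borel_measurable M" using meas[OF that(1)] meas[OF that(2)] E_meas[OF that(3)] by measurable
    fix \<omega> assume w: "\<omega> \<in> space M"
    have "\<bar>X i \<omega>\<bar> \<le> 1" "\<bar>X j \<omega>\<bar> \<le> 1" "\<bar>E J \<omega>\<bar> \<le> B" using rng'[OF that(1) w] rng'[OF that(2) w] E_bnd[OF that(3) w] B_def by auto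
    thus "\<bar>X i \<omega> * (X j \<omega> * E J \<omega>)\<bar> \<le> B" unfolding abs_mult
      by (smt (verit) mult_left_le_one_le abs_ge_zero mult_nonneg_nonneg)
  qed
  define \<phi> where "\<phi> = expectation (E I)"
  have E_mono: "expectation (E J) \<le> \<phi>" if "J \<subseteq> I" for J
    unfolding \<phi>_def
  proof (rule integral_mono[OF E_int[OF that] E_int[OF order_refl]])
    fix \<omega> assume w: "\<omega> \<in> space M"
    have "T J \<omega> \<le> T I \<omega>" unfolding T_def using that rng' w finI by (intro sum_mono2) auto
    moreover have "0 \<le> T J \<omega>" using T_bnd[OF that w] by simp
    ultimately have "(T J \<omega>)^2 \<le> (T I \<omega>)^2" by (intro power_mono) auto
    thus "E J \<omega> \<le> E I \<omega>" unfolding E_def using lam0 by (simp add: mult_left_mono)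
  qed
  have E0: "0 \<le> expectation (E J)" if "J \<subseteq> I" for J
    by (rule integral_nonneg_AE, rule AE_I2) (use E_bnd[OF that] in force)
  have phi1: "1 \<le> \<phi>"
  proof -
    have "expectation (\<lambda>_. 1) \<le> \<phi>" unfolding \<phi>_def
      by (rule integral_mono) (use E_int E_bnd in auto)
    thus ?thesis by (simp add: prob_space)
  qed
  have EX0: "0 \<le> expectation (X i)" if "i \<in> I" for i
    by (rule integral_nonneg_AE, rule AE_I2) (use rng' that in auto)
  have EXnu: "expectation (X i) \<le> \<nu>" if "i \<in> I" for i using ex that by (simp add: I_def)
  have Hrep: "E J = (\<lambda>\<omega>. (\<lambda>f. exp (lam * (\<Sum>k\<in>J. f k)^2)) (restrict (\<lambda>k. X k \<omega>) J))" for J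
    unfolding E_def T_def by (auto intro!: sum.cong simp: fun_eq_iff)
  have fact1: "expectation (\<lambda>\<omega>. X i \<omega> * E J \<omega>) = expectation (X i) * expectation (E J)" if "i \<in> I" "J \<subseteq> I" "i \<notin> J" for i J
    by (rule indep_factor[OF ind' that G_meas[OF order_refl] Hrep X_int[OF that(1)] E_int[OF that(2)]])
  have fact2: "expectation (\<lambda>\<omega>. X i \<omega> * (X j \<omega> * E J \<omega>)) = expectation (X i) * (expectation (X j) * expectation (E J))" if "i \<in> I" "j \<in> I" "J \<subseteq> I" "i \<notin> J" "j \<notin> J" "i \<noteq> j" for i j J
  proof -
    have H: "(\<lambda>\<omega>. X j \<omega> * E J \<omega>) = (\<lambda>\<omega>. (\<lambda>f. f j * exp (lam * (\<Sum>k\<in>J. f k)^2)) (restrict (\<lambda>k. X k \<omega>) (insert j J)))"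
      unfolding E_def T_def using that by (auto intro!: sum.cong simp: fun_eq_iff)
    have "expectation (\<lambda>\<omega>. X i \<omega> * (X j \<omega> * E J \<omega>)) = expectation (X i) * expectation (\<lambda>\<omega>. X j \<omega> * E J \<omega>)"
      by (rule indep_factor[OF ind' that(1) _ _ G_meas2 H X_int[OF that(1)] XE_int[OF that(2,3)]]) (use that in auto)
    also have "\<dots> = expectation (X i) * (expectation (X j) * expectation (E J))"
      using fact1[OF that(2,3,5)] by simp
    finally show ?thesis .
  qed
  have cpos: "c > 0" using c by simp
  have termb: "expectation (\<lambda>\<omega>. X i \<omega> * (X j \<omega> * E I \<omega>)) \<le> (if i = j then c * \<nu> * \<phi> else 0) + c * \<nu>^2 * \<phi>"
    if ij: "i \<in> I" "j \<in> I" for i j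
  proof (cases "i = j")
    case True
    have n1: "n \<ge> 1" using ij by (simp add: I_def)
    have sub: "I - {i} \<subseteq> I" by auto
    have pw: "X i \<omega> * (X j \<omega> * E I \<omega>) \<le> c * (X i \<omega> * E (I - {i}) \<omega>)" if w: "\<omega> \<in> space M" for \<omega>
    proof -
      have x: "0 \<le> X i \<omega>" "X i \<omega> \<le> 1" using rng'[OF ij(1) w] by auto
      have TI: "T I \<omega> = T (I - {i}) \<omega> + X i \<omega>" unfolding T_def using finI ij by (simp add: sum.remove)
      have cd: "card (I - {i}) = n - 1" using cardI ij finI by simp
      have tb: "0 \<le> T (I - {i}) \<omega>" "T (I - {i}) \<omega> \<le> real n - 1" using T_bnd[OF sub w] cd n1 by auto
      have "lam * (1 * (2 * (real n - 1) + 1)) \<le> lam * (4 * real n - 3)" using lam0 n1 by (intro mult_left_mono) auto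
      also have "\<dots> \<le> ln c" using lamc[OF n1] .
      finally have "E I \<omega> \<le> c * E (I - {i}) \<omega>" unfolding E_def TI
        using exp_sq_step[OF tb(1) tb(2) x(1) x(2) lam0 _ cpos] by simp
      moreover have "X i \<omega> * (X i \<omega> * E I \<omega>) \<le> X i \<omega> * E I \<omega>"
        using x E_bnd[OF order_refl w] by (intro mult_left_mono) (auto intro: mult_left_le_one_le)
      ultimately show ?thesis using x True by (smt (verit) mult_left_mono mult.left_commute)
    qed
    have "expectation (\<lambda>\<omega>. X i \<omega> * (X j \<omega> * E I \<omega>)) \<le> expectation (\<lambda>\<omega>. c * (X i \<omega> * E (I - {i}) \<omega>))"
      by (rule integral_mono) (use XXE_int[OF ij order_refl] XE_int[OF ij(1) sub] pw in auto)
    also have "\<dots> = c * (expectation (X i) * expectation (E (I - {i})))"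
      using fact1[OF ij(1) sub] by simp
    also have "\<dots> \<le> c * (\<nu> * \<phi>)"
      using EX0[OF ij(1)] EXnu[OF ij(1)] E_mono[OF sub] E0[OF sub] phi1 cpos
      by (intro mult_left_mono mult_mono) auto
    finally have "expectation (\<lambda>\<omega>. X i \<omega> * (X j \<omega> * E I \<omega>)) \<le> c * \<nu> * \<phi>" by (simp add: mult.assoc)
    moreover have "0 \<le> c * \<nu>^2 * \<phi>" using cpos phi1 by simp
    ultimately show ?thesis using True by simp
  next
    case False
    have n2: "n \<ge> 2"
    proof -
      have "{i, j} \<subseteq> I" using ij by auto
      from card_mono[OF finI this] False cardI show ?thesis by simp
    qed
    hence n1: "n \<ge> 1" by simp
    have sub: "I - {i, j} \<subseteq> I" by auto
    have pw: "X i \<omega> * (X j \<omega> * E I \<omega>) \<le> c * (X i \<omega> * (X j \<omega> * E (I - {i, j}) \<omega>))" if w: "\<omega> \<in> space M" for \<omega>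
    proof -
      have x: "0 \<le> X i \<omega>" "X i \<omega> \<le> 1" using rng'[OF ij(1) w] by auto
      have y: "0 \<le> X j \<omega>" "X j \<omega> \<le> 1" using rng'[OF ij(2) w] by auto
      have TI: "T I \<omega> = T (I - {i, j}) \<omega> + (X i \<omega> + X j \<omega>)"
      proof -
        have "T I \<omega> = T (I - {i}) \<omega> + X i \<omega>" unfolding T_def using finI ij by (simp add: sum.remove)
        moreover have "T (I - {i}) \<omega> = T (I - {i} - {j}) \<omega> + X j \<omega>" unfolding T_def using finI ij False by (subst sum.remove[of "I - {i}" j]) auto
        moreover have "I - {i} - {j} = I - {i, j}" by auto
        ultimately show ?thesis by simp
      qed
      have cd: "card (I - {i, j}) = n - 2" using cardI ij finI False by (simp add: card_Diff_subset)
      have tb: "0 \<le> T (I - {i, j}) \<omega>" "T (I - {i, j}) \<omega> \<le> real n - 2" using T_bnd[OF sub w] cd n2 by auto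
      have "lam * (2 * (2 * (real n - 2) + 2)) \<le> lam * (4 * real n - 3)" using lam0 n1 by (intro mult_left_mono) auto
      also have "\<dots> \<le> ln c" using lamc[OF n1] .
      finally have "E I \<omega> \<le> c * E (I - {i, j}) \<omega>" unfolding E_def TI
        using exp_sq_step[OF tb(1) tb(2) _ _ lam0 _ cpos, of "X i \<omega> + X j \<omega>" 2] x y by simp
      moreover have "0 \<le> X i \<omega> * X j \<omega>" using x y by simp
      ultimately have "(X i \<omega> * X j \<omega>) * E I \<omega> \<le> (X i \<omega> * X j \<omega>) * (c * E (I - {i, j}) \<omega>)"
        by (intro mult_left_mono)
      thus ?thesis by (simp add: algebra_simps)
    qed
    have "expectation (\<lambda>\<omega>. X i \<omega> * (X j \<omega> * E I \<omega>)) \<le> expectation (\<lambda>\<omega>. c * (X i \<omega> * (X j \<omega> * E (I - {i, j}) \<omega>)))"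
      by (rule integral_mono) (use XXE_int[OF ij order_refl] XXE_int[OF ij sub] pw in auto)
    also have "\<dots> = c * (expectation (X i) * (expectation (X j) * expectation (E (I - {i, j}))))"
      using fact2[OF ij sub _ _ False] by simp
    also have "\<dots> \<le> c * (\<nu> * (\<nu> * \<phi>))"
      using EX0[OF ij(1)] EXnu[OF ij(1)] EX0[OF ij(2)] EXnu[OF ij(2)] E_mono[OF sub] E0[OF sub] phi1 cpos nu
      by (intro mult_left_mono mult_mono) auto
    finally show ?thesis using False by (simp add: power2_eq_square algebra_simps)
  qed
  have T2E_int: "integrable M (\<lambda>\<omega>. (T I \<omega>)^2 * E I \<omega>)"
  proof -
    have eq: "(\<lambda>\<omega>. (T I \<omega>)^2 * E I \<omega>) = (\<lambda>\<omega>. \<Sum>i\<in>I. \<Sum>j\<in>I. X i \<omega> * (X j \<omega> * E I \<omega>))"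
      by (simp add: fun_eq_iff T_def power2_eq_square sum_product sum_distrib_left sum_distrib_right mult.assoc mult.left_commute)
    show ?thesis unfolding eq by (intro Bochner_Integration.integrable_sum) (auto intro!: XXE_int)
  qed
  have key: "expectation (\<lambda>\<omega>. (T I \<omega>)^2 * E I \<omega>) \<le> (c * n * \<nu> + c * n^2 * \<nu>^2) * \<phi>"
  proof -
    have eq: "(\<lambda>\<omega>. (T I \<omega>)^2 * E I \<omega>) = (\<lambda>\<omega>. \<Sum>i\<in>I. \<Sum>j\<in>I. X i \<omega> * (X j \<omega> * E I \<omega>))"
      by (simp add: fun_eq_iff T_def power2_eq_square sum_product sum_distrib_left sum_distrib_right mult.assoc mult.left_commute)
    have "expectation (\<lambda>\<omega>. (T I \<omega>)^2 * E I \<omega>) = (\<Sum>i\<in>I. \<Sum>j\<in>I. expectation (\<lambda>\<omega>. X i \<omega> * (X j \<omega> * E I \<omega>)))"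
      unfolding eq by (subst Bochner_Integration.integral_sum) (auto intro!: Bochner_Integration.integrable_sum XXE_int sum.cong Bochner_Integration.integral_sum)
    also have "\<dots> \<le> (\<Sum>i\<in>I. \<Sum>j\<in>I. (if i = j then c * \<nu> * \<phi> else 0) + c * \<nu>^2 * \<phi>)"
      by (intro sum_mono termb)
    also have "\<dots> = (c * n * \<nu> + c * n^2 * \<nu>^2) * \<phi>"
      using finI cardI by (simp add: sum.distrib power2_eq_square algebra_simps)
    finally show ?thesis .
  qed
  define Lg where "Lg = ln \<phi>"
  have expLg: "exp Lg = \<phi>" using phi1 by (simp add: Lg_def)
  have gibbs: "E I \<omega> - \<phi> \<le> lam * ((T I \<omega>)^2 * E I \<omega>) - Lg * E I \<omega>" for \<omega>
  proof -
    define Z where "Z = lam * (T I \<omega>)^2"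
    have "1 + (Lg - Z) \<le> exp (Lg - Z)" by (rule exp_ge_add_one_self)
    hence "exp Z * (1 + (Lg - Z)) \<le> exp Z * exp (Lg - Z)" by (intro mult_left_mono) auto
    also have "\<dots> = \<phi>" using expLg by (simp add: exp_diff)
    finally have "exp Z * (1 + (Lg - Z)) \<le> \<phi>" .
    moreover have m: "lam * ((T I \<omega>)^2 * exp Z) = Z * exp Z" unfolding Z_def by simp
    moreover have e: "E I \<omega> = exp Z" unfolding E_def Z_def by simp
    ultimately show ?thesis unfolding e m by (simp add: algebra_simps)
  qed
  have "expectation (\<lambda>\<omega>. E I \<omega> - \<phi>) \<le> expectation (\<lambda>\<omega>. lam * ((T I \<omega>)^2 * E I \<omega>) - Lg * E I \<omega>)"
    by (rule integral_mono) (use E_int T2E_int gibbs in auto)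
  hence "0 \<le> lam * expectation (\<lambda>\<omega>. (T I \<omega>)^2 * E I \<omega>) - Lg * \<phi>"
    using E_int[OF order_refl] T2E_int by (simp add: \<phi>_def prob_space)
  also have "\<dots> \<le> lam * ((c * n * \<nu> + c * n^2 * \<nu>^2) * \<phi>) - Lg * \<phi>"
    using key lam0 by (simp add: mult_left_mono)
  finally have "Lg * \<phi> \<le> (lam * (c * n * \<nu> + c * n^2 * \<nu>^2)) * \<phi>" by (simp add: algebra_simps)
  hence "Lg \<le> lam * (c * n * \<nu> + c * n^2 * \<nu>^2)" using phi1 by simp
  also have "\<dots> \<le> lam * c * real n * \<nu> * (1 + c * real n * \<nu>)"
  proof -
    have "1 * (c * n^2 * \<nu>^2) \<le> c * (c * n^2 * \<nu>^2)" by (rule mult_right_mono) (use c in auto)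
    hence "c * n * \<nu> + c * n^2 * \<nu>^2 \<le> c * real n * \<nu> * (1 + c * real n * \<nu>)"
      by (simp add: algebra_simps power2_eq_square)
    thus ?thesis using lam0 by (simp add: mult_left_mono mult.assoc)
  qed
  finally have "\<phi> \<le> exp (lam * c * real n * \<nu> * (1 + c * real n * \<nu>))"
    using expLg by (metis exp_le_cancel_iff)
  moreover have "(\<lambda>\<omega>. exp (lam * (\<Sum>i=1..n. X i \<omega>)\<^sup>2)) = E I"
    by (simp add: fun_eq_iff E_def T_def I_def)
  ultimately show ?thesis by (simp add: \<phi>_def)
qed
end

theorem lemma1:
  fixes M :: "'a measure" and X :: "nat \<Rightarrow> 'a \<Rightarrow> real"
    and n :: nat and \<nu> c lam :: real
  assumes "prob_space M"
    and "prob_space.indep_vars M (\<lambda>_. borel) X {1..n}"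
    and "\<And>i \<omega>. i \<in> {1..n} \<Longrightarrow> \<omega> \<in> space M \<Longrightarrow> X i \<omega> \<in> {0..1}"
    and "\<And>i. i \<in> {1..n} \<Longrightarrow> prob_space.expectation M (X i) \<le> \<nu>"
    and "\<nu> \<in> {0..1}"
    and "c \<ge> 1"
    and "lam \<in> {0 .. ln c / (4 * real n - 3)}"
  shows "prob_space.expectation M (\<lambda>\<omega>. exp (lam * (\<Sum>i=1..n. X i \<omega>)\<^sup>2))
           \<le> exp (lam * c * real n * \<nu> * (1 + c * real n * \<nu>))"
  using prob_space.main[OF assms] .

end
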